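(* Let $\mathbb A$ be an abelian category with enough projective objects. A morphism $(f_0,f_1):a\to b$ in $\mathbb A^{[1]}_c$, where $a:A_1\to A_0$ and $b:B_1\to B_0$, is cofaithful in $\mathbb A^{[1]}_c$ if and only if the morphism $(f_0,b):A_0\oplus B_1\to B_0$ is an epimorphism in $\mathbb A$.
   Context: Let $\mathbb A$ be an abelian category. The 2-category $\mathbb A^{[1]}$ has as objects the morphisms $a:A_1\to A_0$ of $\mathbb A$. For objects $a:A_1\to A_0$ and $b:B_1\to B_0$, a morphism $a\to b$ is a pair $(f_0,f_1)$ of morphisms $f_i:A_i\to B_i$ of $\mathbb A$ with $b f_1=f_0 a$; composition is componentwise. A 2-arrow $(f_0,f_1)\Rightarrow(g_0,g_1)$ between morphisms $a\to b$ is a morphism $\alpha:A_0\to B_1$ of $\mathbb A$ with $f_1-g_1=\alpha a$ and $f_0-g_0=b\alpha$; vertical composition is addition of such $\alpha$'s, and whiskering is given by $(h_0,h_1)\circ\alpha=h_1\alpha$ and $\alpha\circ(e_0,e_1)=\alpha e_0$. All 2-arrows are invertible, so each $\mathbf{Hom}(a,b)$ is a groupoid. $\mathbb A^{[1]}_c$ is the full 2-subcategory of $\mathbb A^{[1]}$ on the objects $a:A_1\to A_0$ with $A_0$ projective in $\mathbb A$. A morphism $f:a\to b$ of $\mathbb A^{[1]}_c$ is cofaithful in $\mathbb A^{[1]}_c$ if for every object $x$ of $\mathbb A^{[1]}_c$ the functor $-\circ f:\mathbf{Hom}(b,x)\to\mathbf{Hom}(a,x)$ is faithful. *)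

theory Defs
  imports Main
begin

text \<open>A category with objects of type 'o and arrows of type 'm, equipped with
  an additive structure on hom-sets. cmp g f is "g after f".\<close>

record ('o, 'm) acat =
  Ob   :: "'o set"
  Ar   :: "'m set"
  dom  :: "'m \<Rightarrow> 'o"
  cod  :: "'m \<Rightarrow> 'o"
  cmp  :: "'m \<Rightarrow> 'm \<Rightarrow> 'm"
  idt  :: "'o \<Rightarrow> 'm"
  addm :: "'m \<Rightarrow> 'm \<Rightarrow> 'm"
  zer  :: "'o \<Rightarrow> 'o \<Rightarrow> 'm"
  negm :: "'m \<Rightarrow> 'm"

definition hom :: "('o, 'm, 'x) acat_scheme \<Rightarrow> 'o \<Rightarrow> 'o \<Rightarrow> 'm set" where
  "hom C X Y = {f \<in> Ar C. dom C f = X \<and> cod C f = Y}"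

definition subm :: "('o, 'm, 'x) acat_scheme \<Rightarrow> 'm \<Rightarrow> 'm \<Rightarrow> 'm" where
  "subm C f g = addm C f (negm C g)"

definition is_category :: "('o, 'm, 'x) acat_scheme \<Rightarrow> bool" where
  "is_category C \<longleftrightarrow>
     (\<forall>f \<in> Ar C. dom C f \<in> Ob C \<and> cod C f \<in> Ob C) \<and>
     (\<forall>X \<in> Ob C. idt C X \<in> hom C X X) \<and>
     (\<forall>X \<in> Ob C. \<forall>Y \<in> Ob C. \<forall>Z \<in> Ob C. \<forall>f \<in> hom C X Y. \<forall>g \<in> hom C Y Z.
        cmp C g f \<in> hom C X Z) \<and>
     (\<forall>f \<in> Ar C. cmp C f (idt C (dom C f)) = f \<and> cmp C (idt C (cod C f)) f = f) \<and>
     (\<forall>f \<in> Ar C. \<forall>g \<in> Ar C. \<forall>h \<in> Ar C. cod C f = dom C g \<longrightarrow> cod C g = dom C h \<longrightarrow>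
        cmp C h (cmp C g f) = cmp C (cmp C h g) f)"

definition is_preadditive :: "('o, 'm, 'x) acat_scheme \<Rightarrow> bool" where
  "is_preadditive C \<longleftrightarrow> is_category C \<and>
     (\<forall>X \<in> Ob C. \<forall>Y \<in> Ob C.
        zer C X Y \<in> hom C X Y \<and>
        (\<forall>f \<in> hom C X Y. \<forall>g \<in> hom C X Y. addm C f g \<in> hom C X Y) \<and>
        (\<forall>f \<in> hom C X Y. negm C f \<in> hom C X Y) \<and>
        (\<forall>f \<in> hom C X Y. \<forall>g \<in> hom C X Y. \<forall>h \<in> hom C X Y.
            addm C (addm C f g) h = addm C f (addm C g h)) \<and>
        (\<forall>f \<in> hom C X Y. \<forall>g \<in> hom C X Y. addm C f g = addm C g f) \<and>
        (\<forall>f \<in> hom C X Y. addm C f (zer C X Y) = f) \<and>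
        (\<forall>f \<in> hom C X Y. addm C f (negm C f) = zer C X Y)) \<and>
     (\<forall>X \<in> Ob C. \<forall>Y \<in> Ob C. \<forall>Z \<in> Ob C.
        \<forall>f \<in> hom C X Y. \<forall>g \<in> hom C X Y. \<forall>h \<in> hom C Y Z. \<forall>k \<in> hom C Y Z.
          cmp C h (addm C f g) = addm C (cmp C h f) (cmp C h g) \<and>
          cmp C (addm C h k) f = addm C (cmp C h f) (cmp C k f))"

definition is_mono :: "('o, 'm, 'x) acat_scheme \<Rightarrow> 'm \<Rightarrow> bool" where
  "is_mono C m \<longleftrightarrow> m \<in> Ar C \<and>
     (\<forall>g \<in> Ar C. \<forall>h \<in> Ar C. cod C g = dom C m \<longrightarrow> cod C h = dom C m \<longrightarrow>
        dom C g = dom C h \<longrightarrow> cmp C m g = cmp C m h \<longrightarrow> g = h)"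

definition is_epi :: "('o, 'm, 'x) acat_scheme \<Rightarrow> 'm \<Rightarrow> bool" where
  "is_epi C e \<longleftrightarrow> e \<in> Ar C \<and>
     (\<forall>g \<in> Ar C. \<forall>h \<in> Ar C. dom C g = cod C e \<longrightarrow> dom C h = cod C e \<longrightarrow>
        cod C g = cod C h \<longrightarrow> cmp C g e = cmp C h e \<longrightarrow> g = h)"

definition is_kernel :: "('o, 'm, 'x) acat_scheme \<Rightarrow> 'm \<Rightarrow> 'm \<Rightarrow> bool" where
  "is_kernel C k f \<longleftrightarrow> k \<in> Ar C \<and> f \<in> Ar C \<and> cod C k = dom C f \<and>
     cmp C f k = zer C (dom C k) (cod C f) \<and>
     (\<forall>g \<in> Ar C. cod C g = dom C f \<longrightarrow> cmp C f g = zer C (dom C g) (cod C f) \<longrightarrow>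
        (\<exists>!u. u \<in> hom C (dom C g) (dom C k) \<and> cmp C k u = g))"

definition is_cokernel :: "('o, 'm, 'x) acat_scheme \<Rightarrow> 'm \<Rightarrow> 'm \<Rightarrow> bool" where
  "is_cokernel C c f \<longleftrightarrow> c \<in> Ar C \<and> f \<in> Ar C \<and> dom C c = cod C f \<and>
     cmp C c f = zer C (dom C f) (cod C c) \<and>
     (\<forall>g \<in> Ar C. dom C g = cod C f \<longrightarrow> cmp C g f = zer C (dom C f) (cod C g) \<longrightarrow>
        (\<exists>!u. u \<in> hom C (cod C c) (cod C g) \<and> cmp C u c = g))"

definition is_biproduct ::
  "('o, 'm, 'x) acat_scheme \<Rightarrow> 'o \<Rightarrow> 'o \<Rightarrow> 'o \<Rightarrow> 'm \<Rightarrow> 'm \<Rightarrow> 'm \<Rightarrow> 'm \<Rightarrow> bool" where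
  "is_biproduct C X Y S i1 i2 p1 p2 \<longleftrightarrow> S \<in> Ob C \<and>
     i1 \<in> hom C X S \<and> i2 \<in> hom C Y S \<and> p1 \<in> hom C S X \<and> p2 \<in> hom C S Y \<and>
     cmp C p1 i1 = idt C X \<and> cmp C p2 i2 = idt C Y \<and>
     cmp C p1 i2 = zer C Y X \<and> cmp C p2 i1 = zer C X Y \<and>
     addm C (cmp C i1 p1) (cmp C i2 p2) = idt C S"

definition is_zero_object :: "('o, 'm, 'x) acat_scheme \<Rightarrow> 'o \<Rightarrow> bool" where
  "is_zero_object C Z \<longleftrightarrow> Z \<in> Ob C \<and>
     (\<forall>X \<in> Ob C. (\<exists>!f. f \<in> hom C Z X) \<and> (\<exists>!f. f \<in> hom C X Z))"

definition is_abelian :: "('o, 'm, 'x) acat_scheme \<Rightarrow> bool" where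
  "is_abelian C \<longleftrightarrow> is_preadditive C \<and>
     (\<exists>Z. is_zero_object C Z) \<and>
     (\<forall>X \<in> Ob C. \<forall>Y \<in> Ob C. \<exists>S i1 i2 p1 p2. is_biproduct C X Y S i1 i2 p1 p2) \<and>
     (\<forall>f \<in> Ar C. \<exists>k. is_kernel C k f) \<and>
     (\<forall>f \<in> Ar C. \<exists>c. is_cokernel C c f) \<and>
     (\<forall>m. is_mono C m \<longrightarrow> (\<exists>f. is_kernel C m f)) \<and>
     (\<forall>e. is_epi C e \<longrightarrow> (\<exists>f. is_cokernel C e f))"

definition is_projective :: "('o, 'm, 'x) acat_scheme \<Rightarrow> 'o \<Rightarrow> bool" where
  "is_projective C P \<longleftrightarrow> P \<in> Ob C \<and>
     (\<forall>e f. is_epi C e \<longrightarrow> f \<in> hom C P (cod C e) \<longrightarrow>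
        (\<exists>g \<in> hom C P (dom C e). cmp C e g = f))"

definition enough_projectives :: "('o, 'm, 'x) acat_scheme \<Rightarrow> bool" where
  "enough_projectives C \<longleftrightarrow>
     (\<forall>X \<in> Ob C. \<exists>P e. is_projective C P \<and> e \<in> hom C P X \<and> is_epi C e)"

text \<open>Objects of A^[1]_c: arrows a : A1 \<rightarrow> A0 with A0 projective.\<close>
definition arrc_obj :: "('o, 'm, 'x) acat_scheme \<Rightarrow> 'm \<Rightarrow> bool" where
  "arrc_obj C a \<longleftrightarrow> a \<in> Ar C \<and> is_projective C (cod C a)"

text \<open>Morphisms a \<rightarrow> b of A^[1]: pairs (f0, f1) with b f1 = f0 a.\<close>
definition arr_mor :: "('o, 'm, 'x) acat_scheme \<Rightarrow> 'm \<Rightarrow> 'm \<Rightarrow> 'm \<times> 'm \<Rightarrow> bool" where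
  "arr_mor C a b f \<longleftrightarrow>
     fst f \<in> hom C (cod C a) (cod C b) \<and> snd f \<in> hom C (dom C a) (dom C b) \<and>
     cmp C b (snd f) = cmp C (fst f) a"

text \<open>2-arrows f \<Rightarrow> g between morphisms a \<rightarrow> b: \<alpha> : A0 \<rightarrow> B1 with
  f1 - g1 = \<alpha> a and f0 - g0 = b \<alpha>.\<close>
definition arr_2cell ::
  "('o, 'm, 'x) acat_scheme \<Rightarrow> 'm \<Rightarrow> 'm \<Rightarrow> 'm \<times> 'm \<Rightarrow> 'm \<times> 'm \<Rightarrow> 'm \<Rightarrow> bool" where
  "arr_2cell C a b f g \<alpha> \<longleftrightarrow>
     \<alpha> \<in> hom C (cod C a) (dom C b) \<and>
     subm C (snd f) (snd g) = cmp C \<alpha> a \<and>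
     subm C (fst f) (fst g) = cmp C b \<alpha>"

text \<open>Precomposition with f = (f0,f1) on 2-arrows: \<alpha> \<circ> f = \<alpha> f0.
  f : a \<rightarrow> b is cofaithful in A^[1]_c if for each object x of A^[1]_c the
  functor - \<circ> f : Hom(b,x) \<rightarrow> Hom(a,x) is faithful, i.e. injective on the
  2-arrows between any two fixed parallel morphisms b \<rightarrow> x.\<close>
definition cofaithful_c :: "('o, 'm, 'x) acat_scheme \<Rightarrow> 'm \<Rightarrow> 'm \<Rightarrow> 'm \<times> 'm \<Rightarrow> bool" where
  "cofaithful_c C a b f \<longleftrightarrow>
     (\<forall>x g g' \<alpha> \<beta>. arrc_obj C x \<longrightarrow> arr_mor C b x g \<longrightarrow> arr_mor C b x g' \<longrightarrow>
        arr_2cell C b x g g' \<alpha> \<longrightarrow> arr_2cell C b x g g' \<beta> \<longrightarrow>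
        cmp C \<alpha> (fst f) = cmp C \<beta> (fst f) \<longrightarrow> \<alpha> = \<beta>)"

end

theory Submission
  imports Defs
begin

lemma hom_Ob:
  assumes "is_category C" "f \<in> hom C X Y"
  shows "X \<in> Ob C" "Y \<in> Ob C" "f \<in> Ar C" "dom C f = X" "cod C f = Y"
  using assms unfolding is_category_def hom_def by auto

lemma comp_hom:
  assumes "is_category C" "f \<in> hom C X Y" "g \<in> hom C Y Z"
  shows "cmp C g f \<in> hom C X Z"
proof -
  have "X \<in> Ob C" "Y \<in> Ob C" "Z \<in> Ob C" using hom_Ob assms by metis+
  thus ?thesis using assms unfolding is_category_def by blast
qed

lemma assoc:
  assumes "is_category C" "f \<in> hom C X Y" "g \<in> hom C Y Z" "h \<in> hom C Z W"
  shows "cmp C h (cmp C g f) = cmp C (cmp C h g) f"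
  using assms unfolding is_category_def hom_def by auto

lemma idr:
  assumes "is_category C" "f \<in> hom C X Y"
  shows "cmp C f (idt C X) = f"
  using assms unfolding is_category_def hom_def by auto

lemma pa_cat: "is_preadditive C \<Longrightarrow> is_category C"
  unfolding is_preadditive_def by simp

lemma pa_grp:
  assumes "is_preadditive C" "X \<in> Ob C" "Y \<in> Ob C"
  shows "zer C X Y \<in> hom C X Y"
    "\<And>f g. f \<in> hom C X Y \<Longrightarrow> g \<in> hom C X Y \<Longrightarrow> addm C f g \<in> hom C X Y"
    "\<And>f. f \<in> hom C X Y \<Longrightarrow> negm C f \<in> hom C X Y"
    "\<And>f g h. f \<in> hom C X Y \<Longrightarrow> g \<in> hom C X Y \<Longrightarrow> h \<in> hom C X Y \<Longrightarrow>
            addm C (addm C f g) h = addm C f (addm C g h)"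
    "\<And>f g. f \<in> hom C X Y \<Longrightarrow> g \<in> hom C X Y \<Longrightarrow> addm C f g = addm C g f"
    "\<And>f. f \<in> hom C X Y \<Longrightarrow> addm C f (zer C X Y) = f"
    "\<And>f. f \<in> hom C X Y \<Longrightarrow> addm C f (negm C f) = zer C X Y"
  using assms unfolding is_preadditive_def by blast+

lemma bil:
  assumes "is_preadditive C" "f \<in> hom C X Y" "g \<in> hom C X Y" "h \<in> hom C Y Z" "k \<in> hom C Y Z"
  shows "cmp C h (addm C f g) = addm C (cmp C h f) (cmp C h g)"
    "cmp C (addm C h k) f = addm C (cmp C h f) (cmp C k f)"
proof -
  have c: "is_category C" using assms pa_cat by blast
  have "X \<in> Ob C" "Y \<in> Ob C" "Z \<in> Ob C" using hom_Ob[OF c] assms by metis+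
  thus "cmp C h (addm C f g) = addm C (cmp C h f) (cmp C h g)"
    "cmp C (addm C h k) f = addm C (cmp C h f) (cmp C k f)"
    using assms unfolding is_preadditive_def by blast+
qed

lemma idem_zero:
  assumes "is_preadditive C" "X \<in> Ob C" "Y \<in> Ob C" "u \<in> hom C X Y" "u = addm C u u"
  shows "u = zer C X Y"
proof -
  note G = pa_grp[OF assms(1-3)]
  have "zer C X Y = addm C u (negm C u)" using G(7) assms(4) by metis
  also have "\<dots> = addm C (addm C u u) (negm C u)" using assms(5) by metis
  also have "\<dots> = addm C u (addm C u (negm C u))" using G(3,4) assms(4) by metis
  also have "\<dots> = u" using G(6,7) assms(4) by metis
  finally show ?thesis by simp
qed

lemma cmp_zer_right:
  assumes "is_preadditive C" "h \<in> hom C Y Z" "X \<in> Ob C"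
  shows "cmp C h (zer C X Y) = zer C X Z"
proof -
  have c: "is_category C" using assms pa_cat by blast
  have O: "Y \<in> Ob C" "Z \<in> Ob C" using hom_Ob[OF c] assms by metis+
  note G = pa_grp[OF assms(1) assms(3) O(1)]
  have h0: "cmp C h (zer C X Y) \<in> hom C X Z" using comp_hom[OF c] G(1) assms by blast
  have "cmp C h (zer C X Y) = cmp C h (addm C (zer C X Y) (zer C X Y))" using G by simp
  also have "\<dots> = addm C (cmp C h (zer C X Y)) (cmp C h (zer C X Y))"
    using bil(1)[OF assms(1) G(1) G(1) assms(2) assms(2)] .
  finally show ?thesis using idem_zero[OF assms(1) assms(3) O(2) h0] by simp
qed

lemma cmp_zer_left:
  assumes "is_preadditive C" "f \<in> hom C X Y" "Z \<in> Ob C"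
  shows "cmp C (zer C Y Z) f = zer C X Z"
proof -
  have c: "is_category C" using assms pa_cat by blast
  have O: "X \<in> Ob C" "Y \<in> Ob C" using hom_Ob[OF c] assms by metis+
  note G = pa_grp[OF assms(1) O(2) assms(3)]
  have h0: "cmp C (zer C Y Z) f \<in> hom C X Z" using comp_hom[OF c] G(1) assms by blast
  have "cmp C (zer C Y Z) f = cmp C (addm C (zer C Y Z) (zer C Y Z)) f" using G by simp
  also have "\<dots> = addm C (cmp C (zer C Y Z) f) (cmp C (zer C Y Z) f)"
    using bil(2)[OF assms(1) assms(2) assms(2) G(1) G(1)] .
  finally show ?thesis using idem_zero[OF assms(1) O(1) assms(3) h0] by simp
qed

lemma zero_add:
  assumes "is_preadditive C" "f \<in> hom C X Y"
  shows "addm C (zer C X Y) f = f"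
proof -
  have c: "is_category C" using assms pa_cat by blast
  have O: "X \<in> Ob C" "Y \<in> Ob C" using hom_Ob[OF c] assms by metis+
  note G = pa_grp[OF assms(1) O]
  show ?thesis using G assms by metis
qed

lemma subm_zer:
  assumes "is_preadditive C" "f \<in> hom C X Y"
  shows "subm C f (zer C X Y) = f"
proof -
  have c: "is_category C" using assms pa_cat by blast
  have O: "X \<in> Ob C" "Y \<in> Ob C" using hom_Ob[OF c] assms by metis+
  note G = pa_grp[OF assms(1) O]
  have "negm C (zer C X Y) = zer C X Y"
    using G zero_add[OF assms(1) G(3)[OF G(1)]] by metis
  thus ?thesis unfolding subm_def using G assms by simp
qed



lemma zero_into:
  assumes "is_zero_object C Z" "X \<in> Ob C" "u \<in> hom C X Z" "v \<in> hom C X Z"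
  shows "u = v"
  using assms unfolding is_zero_object_def by metis

lemma zero_proj:
  assumes "is_category C" "is_zero_object C Z"
  shows "is_projective C Z"
  unfolding is_projective_def
proof (intro conjI allI impI)
  show "Z \<in> Ob C" using assms unfolding is_zero_object_def by blast
  fix e f assume e: "is_epi C e" and f: "f \<in> hom C Z (cod C e)"
  have eA: "e \<in> Ar C" using e unfolding is_epi_def by blast
  have eh: "e \<in> hom C (dom C e) (cod C e)" using eA unfolding hom_def by blast
  have "dom C e \<in> Ob C" "cod C e \<in> Ob C" using assms(1) eA unfolding is_category_def by auto
  then obtain g where g: "g \<in> hom C Z (dom C e)" using assms(2) unfolding is_zero_object_def by blast
  have "cmp C e g \<in> hom C Z (cod C e)" using comp_hom[OF assms(1) g eh] .
  hence "cmp C e g = f" using f assms(2) \<open>cod C e \<in> Ob C\<close> unfolding is_zero_object_def by metis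
  thus "\<exists>g\<in>hom C Z (dom C e). cmp C e g = f" using g by blast
qed

theorem lemma3p4:
  fixes C :: "('o, 'm) acat"
    and a b f0 f1 :: 'm
  assumes "is_abelian C"
    and "enough_projectives C"
    and "arrc_obj C a" and "arrc_obj C b"
    and "arr_mor C a b (f0, f1)"
  shows "\<forall>S i1 i2 p1 p2.
           is_biproduct C (cod C a) (dom C b) S i1 i2 p1 p2 \<longrightarrow>
           (cofaithful_c C a b (f0, f1) \<longleftrightarrow>
            is_epi C (addm C (cmp C f0 p1) (cmp C b p2)))"
proof (intro allI impI)
  fix S i1 i2 p1 p2
  assume bp: "is_biproduct C (cod C a) (dom C b) S i1 i2 p1 p2"
  have pre: "is_preadditive C" using assms(1) unfolding is_abelian_def by blast
  have c: "is_category C" using pre pa_cat by blast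
  define A0 where "A0 = cod C a"
  define B1 where "B1 = dom C b"
  define B0 where "B0 = cod C b"
  have bA: "b \<in> Ar C" using assms(4) unfolding arrc_obj_def by blast
  have bh: "b \<in> hom C B1 B0" using bA unfolding hom_def B1_def B0_def by blast
  have f0h: "f0 \<in> hom C A0 B0" using assms(5) unfolding arr_mor_def A0_def B0_def by simp
  have i1: "i1 \<in> hom C A0 S" and i2: "i2 \<in> hom C B1 S" and p1: "p1 \<in> hom C S A0"
    and p2: "p2 \<in> hom C S B1" and SO: "S \<in> Ob C"
    using bp unfolding is_biproduct_def A0_def B1_def by blast+
  have r1: "cmp C p1 i1 = idt C A0" "cmp C p2 i2 = idt C B1" "cmp C p1 i2 = zer C B1 A0"
    "cmp C p2 i1 = zer C A0 B1"
    using bp unfolding is_biproduct_def A0_def B1_def by blast+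
  have OA0: "A0 \<in> Ob C" and OB1: "B1 \<in> Ob C" and OB0: "B0 \<in> Ob C"
    using hom_Ob[OF c f0h] hom_Ob[OF c bh] by auto
  define e where "e = addm C (cmp C f0 p1) (cmp C b p2)"
  have m1: "cmp C f0 p1 \<in> hom C S B0" using comp_hom[OF c p1 f0h] .
  have m2: "cmp C b p2 \<in> hom C S B0" using comp_hom[OF c p2 bh] .
  have eh: "e \<in> hom C S B0" unfolding e_def using pa_grp(2)[OF pre SO OB0 m1 m2] .
  have ei1: "cmp C e i1 = f0"
  proof -
    have "cmp C e i1 = addm C (cmp C (cmp C f0 p1) i1) (cmp C (cmp C b p2) i1)"
      unfolding e_def using bil(2)[OF pre i1 i1 m1 m2] .
    also have "cmp C (cmp C f0 p1) i1 = f0"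
      using assoc[OF c i1 p1 f0h] r1(1) idr[OF c f0h] by simp
    also have "cmp C (cmp C b p2) i1 = zer C A0 B0"
      using assoc[OF c i1 p2 bh] r1(4) cmp_zer_right[OF pre bh OA0] by simp
    finally show ?thesis using pa_grp(6)[OF pre OA0 OB0 f0h] by simp
  qed
  have ei2: "cmp C e i2 = b"
  proof -
    have "cmp C e i2 = addm C (cmp C (cmp C f0 p1) i2) (cmp C (cmp C b p2) i2)"
      unfolding e_def using bil(2)[OF pre i2 i2 m1 m2] .
    also have "cmp C (cmp C b p2) i2 = b"
      using assoc[OF c i2 p2 bh] r1(2) idr[OF c bh] by simp
    also have "cmp C (cmp C f0 p1) i2 = zer C B1 B0"
      using assoc[OF c i2 p1 f0h] r1(3) cmp_zer_right[OF pre f0h OB1] by simp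
    finally show ?thesis using zero_add[OF pre bh] by simp
  qed
  show "cofaithful_c C a b (f0, f1) \<longleftrightarrow> is_epi C (addm C (cmp C f0 p1) (cmp C b p2))"
    unfolding e_def[symmetric]
  proof
    assume cf: "cofaithful_c C a b (f0, f1)"
    obtain Z where Z: "is_zero_object C Z" using assms(1) unfolding is_abelian_def by blast
    have OZ: "Z \<in> Ob C" using Z unfolding is_zero_object_def by blast
    show "is_epi C e" unfolding is_epi_def
    proof (intro conjI ballI impI)
      show "e \<in> Ar C" using eh unfolding hom_def by blast
      fix g h assume gA: "g \<in> Ar C" and hA: "h \<in> Ar C" and dg: "dom C g = cod C e"
        and dh: "dom C h = cod C e" and cgh: "cod C g = cod C h"
        and eq: "cmp C g e = cmp C h e"
      define Y where "Y = cod C g"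
      have gh: "g \<in> hom C B0 Y" using gA dg eh unfolding hom_def Y_def by auto
      have hh: "h \<in> hom C B0 Y" using hA dh eh cgh unfolding hom_def Y_def by auto
      have OY: "Y \<in> Ob C" using hom_Ob[OF c gh] by simp
      have gf0: "cmp C g f0 = cmp C h f0"
        using assoc[OF c i1 eh gh] assoc[OF c i1 eh hh] eq ei1 by simp
      have gb: "cmp C g b = cmp C h b"
        using assoc[OF c i2 eh gh] assoc[OF c i2 eh hh] eq ei2 by simp
      define x where "x = zer C Y Z"
      have xh: "x \<in> hom C Y Z" unfolding x_def using pa_grp(1)[OF pre OY OZ] .
      have xo: "arrc_obj C x" unfolding arrc_obj_def
        using xh zero_proj[OF c Z] unfolding hom_def by auto
      have dx: "dom C x = Y" and cx: "cod C x = Z" using xh unfolding hom_def by auto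
      have z0: "zer C B0 Z \<in> hom C B0 Z" using pa_grp(1)[OF pre OB0 OZ] .
      have z1: "zer C B1 Y \<in> hom C B1 Y" using pa_grp(1)[OF pre OB1 OY] .
      have gbh: "cmp C g b \<in> hom C B1 Y" using comp_hom[OF c bh gh] .
      have mor: "arr_mor C b x (zer C B0 Z, y)" if "y \<in> hom C B1 Y" for y
      proof -
        have "cmp C x y = cmp C (zer C B0 Z) b"
          using zero_into[OF Z OB1 comp_hom[OF c that xh] comp_hom[OF c bh z0]] .
        thus ?thesis unfolding arr_mor_def using that z0 dx cx B0_def B1_def by simp
      qed
      have cell: "arr_2cell C b x (zer C B0 Z, cmp C g b) (zer C B0 Z, zer C B1 Y) k"
        if kh: "k \<in> hom C B0 Y" and kb: "cmp C k b = cmp C g b" for k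
      proof -
        have s1: "subm C (cmp C g b) (zer C B1 Y) = cmp C k b"
          using subm_zer[OF pre gbh] kb by simp
        have sh: "subm C (zer C B0 Z) (zer C B0 Z) \<in> hom C B0 Z"
          unfolding subm_def using pa_grp[OF pre OB0 OZ] by blast
        have s2: "subm C (zer C B0 Z) (zer C B0 Z) = cmp C x k"
          using zero_into[OF Z OB0 sh comp_hom[OF c kh xh]] .
        show ?thesis unfolding arr_2cell_def using kh s1 s2 dx B0_def by simp
      qed
      show "g = h"
        using cf xo mor[OF gbh] mor[OF z1] cell[OF gh refl] cell[OF hh gb[symmetric]] gf0
        unfolding cofaithful_c_def by (metis fst_conv)
    qed
  next
    assume ep: "is_epi C e"
    show "cofaithful_c C a b (f0, f1)" unfolding cofaithful_c_def
    proof (intro allI impI)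
      fix x g g' \<alpha> \<beta>
      assume xo: "arrc_obj C x" and "arr_mor C b x g" "arr_mor C b x g'"
        and ca: "arr_2cell C b x g g' \<alpha>" and cb: "arr_2cell C b x g g' \<beta>"
        and ef: "cmp C \<alpha> (fst (f0, f1)) = cmp C \<beta> (fst (f0, f1))"
      define X1 where "X1 = dom C x"
      have ah: "\<alpha> \<in> hom C B0 X1" and bh': "\<beta> \<in> hom C B0 X1"
        using ca cb unfolding arr_2cell_def B0_def X1_def by auto
      have ab: "cmp C \<alpha> b = cmp C \<beta> b" using ca cb unfolding arr_2cell_def by simp
      have af: "cmp C \<alpha> f0 = cmp C \<beta> f0" using ef by simp
      have expand: "cmp C k e = addm C (cmp C (cmp C k f0) p1) (cmp C (cmp C k b) p2)"
        if kh: "k \<in> hom C B0 X1" for k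
      proof -
        have "cmp C k e = addm C (cmp C k (cmp C f0 p1)) (cmp C k (cmp C b p2))"
          unfolding e_def using bil(1)[OF pre m1 m2 kh kh] .
        thus ?thesis using assoc[OF c p1 f0h kh] assoc[OF c p2 bh kh] by simp
      qed
      have "cmp C \<alpha> e = cmp C \<beta> e" using expand[OF ah] expand[OF bh'] ab af by simp
      thus "\<alpha> = \<beta>" using ep ah bh' eh unfolding is_epi_def hom_def by auto
    qed
  qed
qed

end
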